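(* Let $\mathcal{G}=(\mathcal{V},\mathcal{E})$ be an undirected graph with $|\mathcal{N}_i|\ge (d+1)F+1$ for every $i\in\mathcal{V}$, and let $i\in\mathcal{B}$ be a benign agent updating by the resilient multi-dimensional consensus algorithm described in the context. Fix a time $k$, let $p=(k\bmod d)+1$, and let $\underline{m}_p(k)$ and $\overline{M}_p(k)$ be respectively the $(dF+1)$-th smallest and the $(dF+1)$-th largest of the values $e_p^{T}x$, $x\in\mathcal{X}^i(k)$ (counted with multiplicity). Then $y^i_p(k)\le\underline{m}_p(k)$ and $z^i_p(k)\ge\overline{M}_p(k)$.
   Context: $\mathcal{G}=(\mathcal{V},\mathcal{E})$ is undirected, $\mathcal{N}_i=\{j\in\mathcal{V}: e_{ij}\in\mathcal{E}\}$; $\mathcal{B}\subset\mathcal{V}$ is the set of benign agents; the other agents may send arbitrary values. $e_p$ is the $p$-th canonical basis vector of $\mathbb{R}^d$ and $v_p$ denotes the $p$-th entry of a vector $v$. For a finite multiset $\mathcal{A}\subset\mathbb{R}^d$ of cardinality $m$ (counted with multiplicity) and integer $0\le n\le m$, let $\mathcal{S}(\mathcal{A},n)$ be the collection of all sub-multisets of $\mathcal{A}$ of cardinality $m-n$, and $\varPsi(\mathcal{A},n)=\bigcap_{S\in\mathcal{S}(\mathcal{A},n)}\mathrm{Conv}(S)$. Algorithm: each benign agent $i$ has state $x^i(k)\in\mathbb{R}^d$. At each time $k$: (1) $i$ collects in the multiset $\mathcal{X}^i(k)$ the values received from all $j\in\mathcal{N}_i$; (2) with $p=(k \bmod d)+1$,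 it sorts the points of $\mathcal{X}^i(k)$ in ascending order of their $p$-th entries; (3) $\mathcal{Y}^i(k)$ is the multiset of the first $(d+1)F+1$ sorted points, and $y^i(k)$ is any point of $\varPsi(\mathcal{Y}^i(k),F)$; (4) $\mathcal{Z}^i(k)$ is the multiset of the last $(d+1)F+1$ sorted points, and $z^i(k)$ is any point of $\varPsi(\mathcal{Z}^i(k),F)$; (5) $x^i(k+1)=\frac{1}{3}\big(x^i(k)+y^i(k)+z^i(k)\big)$. *)

theory Defs
  imports "HOL-Analysis.Analysis" "HOL-Library.Multiset"
begin

definition nbrs :: "'v set \<Rightarrow> ('v \<times> 'v) set \<Rightarrow> 'v \<Rightarrow> 'v set" where
  "nbrs V E i = {j \<in> V. (i, j) \<in> E}"

definition Psi :: "'a::real_vector multiset \<Rightarrow> nat \<Rightarrow> 'a set" where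
  "Psi A n = (\<Inter>S \<in> {S. S \<subseteq># A \<and> size S = size A - n}. convex hull (set_mset S))"

definition kth_smallest :: "'a::linorder multiset \<Rightarrow> nat \<Rightarrow> 'a" where
  "kth_smallest M j = sorted_list_of_multiset M ! (j - 1)"

definition kth_largest :: "'a::linorder multiset \<Rightarrow> nat \<Rightarrow> 'a" where
  "kth_largest M j = rev (sorted_list_of_multiset M) ! (j - 1)"

end

theory Submission
  imports Defs
begin

lemma take_sub: "a \<le> b \<Longrightarrow> mset (take a xs) \<subseteq># mset (take b xs)"
proof -
  assume "a \<le> b"
  then have "take b xs = take a xs @ take (b - a) (drop a xs)"
    by (metis le_add_diff_inverse take_add)
  then show ?thesis by (metis mset_append mset_subset_eq_add_left)
qed

lemma drop_sub: "a \<le> b \<Longrightarrow> mset (drop b xs) \<subseteq># mset (drop a xs)"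
proof -
  assume "a \<le> b"
  then have "drop a xs = take (b - a) (drop a xs) @ drop b xs"
    by (metis append_take_drop_id drop_drop le_add_diff_inverse2)
  then show ?thesis by (metis mset_append mset_subset_eq_add_right)
qed

lemma hull_le:
  fixes S :: "(real^'d) set"
  assumes "\<forall>x\<in>S. x $ j \<le> M" "y \<in> convex hull S"
  shows "y $ j \<le> M"
proof -
  have c: "convex {x::real^'d. x $ j \<le> M}"
    by (rule convexI) (auto intro: convex_bound_le)
  have "convex hull S \<subseteq> {x. x $ j \<le> M}"
    using assms(1) by (intro hull_minimal c) auto
  then show ?thesis using assms(2) by auto
qed

lemma hull_ge:
  fixes S :: "(real^'d) set"
  assumes "\<forall>x\<in>S. x $ j \<ge> M" "y \<in> convex hull S"
  shows "y $ j \<ge> M"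
proof -
  have c: "convex {x::real^'d. x $ j \<ge> M}"
  proof (rule convexI)
    fix x y :: "real^'d" and u v :: real
    assume h: "x \<in> {x. x $ j \<ge> M}" "y \<in> {x. x $ j \<ge> M}" "0 \<le> u" "0 \<le> v" "u + v = 1"
    have "u * M \<le> u * x $ j" using h by (simp add: mult_left_mono)
    moreover have "v * M \<le> v * y $ j" using h by (simp add: mult_left_mono)
    ultimately have "(u + v) * M \<le> u * x $ j + v * y $ j" by (simp add: distrib_right)
    then show "u *\<^sub>R x + v *\<^sub>R y \<in> {x. x $ j \<ge> M}" using h by simp
  qed
  have "convex hull S \<subseteq> {x. x $ j \<ge> M}"
    using assms(1) by (intro hull_minimal c) auto
  then show ?thesis using assms(2) by auto
qed

theorem corollary2:
  fixes V :: "'v set" and E :: "('v \<times> 'v) set" and B :: "'v set"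
    and F :: nat and k :: nat and i :: 'v
    and idx :: "nat \<Rightarrow> 'd::finite"
    and recv :: "'v \<Rightarrow> real^'d"
    and xs :: "(real^'d) list"
    and y z :: "real^'d"
  assumes finV: "finite V"
    and undirected: "\<forall>a b. (a, b) \<in> E \<longrightarrow> (b, a) \<in> E"
    and edges: "E \<subseteq> V \<times> V"
    and deg: "\<forall>j \<in> V. card (nbrs V E j) \<ge> (CARD('d) + 1) * F + 1"
    and BV: "B \<subseteq> V" and iB: "i \<in> B"
    and idx: "bij_betw idx {1..CARD('d)} UNIV"
    and X_def: "mset xs = image_mset recv (mset_set (nbrs V E i))"
    and sorted: "sorted (map (\<lambda>x. x $ idx (k mod CARD('d) + 1)) xs)"
    and y: "y \<in> Psi (mset (take ((CARD('d) + 1) * F + 1) xs)) F"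
    and z: "z \<in> Psi (mset (drop (length xs - ((CARD('d) + 1) * F + 1)) xs)) F"
  shows "y $ idx (k mod CARD('d) + 1) \<le>
           kth_smallest (image_mset (\<lambda>x. x $ idx (k mod CARD('d) + 1)) (mset xs)) (CARD('d) * F + 1)
       \<and> z $ idx (k mod CARD('d) + 1) \<ge>
           kth_largest (image_mset (\<lambda>x. x $ idx (k mod CARD('d) + 1)) (mset xs)) (CARD('d) * F + 1)"
proof -
  define j where "j = idx (k mod CARD('d) + 1)"
  define c where "c = (\<lambda>x::real^'d. x $ j)"
  define n where "n = (CARD('d) + 1) * F + 1"
  define m where "m = CARD('d) * F + 1"
  have nm: "n = m + F" unfolding n_def m_def by (simp add: algebra_simps)
  have "length xs = size (mset xs)" by simp
  also have "\<dots> = card (nbrs V E i)" using X_def by simp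
  finally have len: "length xs \<ge> n" using deg iB BV unfolding n_def by auto
  have srt: "sorted (map c xs)" using sorted unfolding c_def j_def .
  have L: "sorted_list_of_multiset (image_mset c (mset xs)) = map c xs"
    using srt by (metis mset_map sorted_list_of_multiset_mset sorted_sort_id)
  have ks: "kth_smallest (image_mset c (mset xs)) m = c (xs ! (m - 1))"
  proof -
    have m0: "m \<ge> 1" unfolding m_def by simp
    have m1: "m \<ge> 1" "m - 1 < length xs" using m0 len nm by linarith+
    then show ?thesis unfolding kth_smallest_def L by (simp only: nth_map)
  qed
  have kl: "kth_largest (image_mset c (mset xs)) m = c (xs ! (length xs - m))"
  proof -
    have m0: "m \<ge> 1" unfolding m_def by simp
    have m1: "m \<ge> 1" "m - 1 < length xs" using m0 len nm by linarith+
    have "rev (map c xs) ! (m - 1) = map c xs ! (length xs - Suc (m - 1))"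
      using m1 by (simp only: rev_nth length_map)
    also have "\<dots> = c (xs ! (length xs - m))"
    proof -
      have e: "length xs - Suc (m - 1) = length xs - m" using m1 by linarith
      have "length xs - m < length xs" using m1 by linarith
      then show ?thesis unfolding e by (simp only: nth_map)
    qed
    finally show ?thesis unfolding kth_largest_def L .
  qed
  have sm: "\<And>a b. a < b \<Longrightarrow> b < length xs \<Longrightarrow> c (xs ! a) \<le> c (xs ! b)"
    proof -
    fix a b assume ab: "a < b" "b < length xs"
    have "map c xs ! a \<le> map c xs ! b"
      using sorted_nth_mono[OF srt, of a b] ab by simp
    then show "c (xs ! a) \<le> c (xs ! b)" using ab by simp
  qed
  have S1: "mset (take m xs) \<in> {S. S \<subseteq># mset (take n xs) \<and> size S = size (mset (take n xs)) - F}"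
    using len nm by (auto intro: take_sub)
  have y1: "y \<in> convex hull set (take m xs)"
    using y S1 unfolding Psi_def n_def by (metis (no_types, lifting) INT_D set_mset_mset)
  have "\<forall>x\<in>set (take m xs). c x \<le> c (xs ! (m - 1))"
  proof
    fix x assume "x \<in> set (take m xs)"
    then obtain a where a: "a < m" "a < length xs" "x = xs ! a"
      by (auto simp: in_set_conv_nth)
    then show "c x \<le> c (xs ! (m - 1))"
      using sm[of a "m - 1"] len nm by (cases "a = m - 1") auto
  qed
  then have yy: "c y \<le> c (xs ! (m - 1))"
    using hull_le[OF _ y1] unfolding c_def by blast
  have S2: "mset (drop (length xs - m) xs) \<in> {S. S \<subseteq># mset (drop (length xs - n) xs) \<and> size S = size (mset (drop (length xs - n) xs)) - F}"
    using len nm by (auto intro: drop_sub)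
  have z1: "z \<in> convex hull set (drop (length xs - m) xs)"
    using z S2 unfolding Psi_def n_def by (metis (no_types, lifting) INT_D set_mset_mset)
  have "\<forall>x\<in>set (drop (length xs - m) xs). c x \<ge> c (xs ! (length xs - m))"
  proof
    fix x assume "x \<in> set (drop (length xs - m) xs)"
    then obtain a where a: "a < length xs - (length xs - m)" "x = xs ! (length xs - m + a)"
      by (auto simp: in_set_conv_nth nth_drop)
    then have a': "a < m" "a + (length xs - m) < length xs" "x = xs ! (a + (length xs - m))"
      using len nm by (auto simp: add.commute)
    then show "c x \<ge> c (xs ! (length xs - m))"
      using a' sm[of "length xs - m" "a + (length xs - m)"] by (cases "a = 0") auto
  qed
  then have zz: "c z \<ge> c (xs ! (length xs - m))"
    using hull_ge[OF _ z1] unfolding c_def by blast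
  show ?thesis using yy zz ks kl unfolding c_def j_def m_def by simp
qed

end
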